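(* Let $\mu$ be a continuous probability measure on $\mathbb{R}^n$ and $\alpha\in[0,1]$. If $S\subset\mathbb{R}^n$ is a compact, connected set with $\mu(S)\ge\max\{\alpha,1-\alpha\}$, then there exists a function $f:S^{n-1}\to\mathbb{R}^n$ such that $\mu\big(H^+_{v,\langle v,f(v)\rangle}\big)=\alpha$ for all $v\in S^{n-1}$ and $\operatorname{Im} f\subset S$.
   Context: A continuous probability measure on $\mathbb{R}^n$ is a Borel probability measure absolutely continuous with respect to Lebesgue measure. For $v\ne 0$, $\lambda\in\mathbb{R}$: $H^+_{v,\lambda}=\{x\in\mathbb{R}^n:\langle x,v\rangle\ge\lambda\}$. *)

theory Defs
  imports "HOL-Analysis.Analysis" "HOL-Probability.Probability"
begin

definition halfspace_plus :: "'a::euclidean_space \<Rightarrow> real \<Rightarrow> 'a set" where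
  "halfspace_plus v l = {x. inner x v \<ge> l}"

definition continuous_prob_measure :: "'a::euclidean_space measure \<Rightarrow> bool" where
  "continuous_prob_measure M \<longleftrightarrow>
     prob_space M \<and> sets M = sets borel \<and> absolutely_continuous lborel M"

end

theory Submission
  imports Defs
begin

lemma hyp_null:
  fixes M :: "'a::euclidean_space measure"
  assumes "continuous_prob_measure M" "v \<noteq> 0"
  shows "{x. x \<bullet> v = t} \<in> null_sets M"
proof -
  have ac: "null_sets lborel \<subseteq> null_sets M" and sb: "sets M = sets borel"
    using assms(1) by (auto simp: continuous_prob_measure_def absolutely_continuous_def)
  have "negligible {x. v \<bullet> x = t}" using negligible_hyperplane[of v t] assms(2) by simp
  hence n: "negligible {x. x \<bullet> v = t}" by (simp add: inner_commute)
  have cl: "closed {x::'a. x \<bullet> v = t}" by (intro closed_Collect_eq continuous_intros)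
  hence bs: "{x::'a. x \<bullet> v = t} \<in> sets lborel" by simp
  have "{x. x \<bullet> v = t} \<in> null_sets lebesgue" using n negligible_iff_null_sets by blast
  hence "{x. x \<bullet> v = t} \<in> null_sets lborel" using null_sets_completion_iff[OF bs] by simp
  thus ?thesis using ac by blast
qed

theorem mainTheorem4:
  fixes M :: "'a::euclidean_space measure" and S :: "'a set" and \<alpha> :: real
  assumes "continuous_prob_measure M"
    and "\<alpha> \<in> {0..1}"
    and "compact S" and "connected S"
    and "measure M S \<ge> max \<alpha> (1 - \<alpha>)"
  shows "\<exists>f :: 'a \<Rightarrow> 'a.
           (\<forall>v \<in> sphere 0 1. measure M (halfspace_plus v (inner v (f v))) = \<alpha>)
           \<and> f ` sphere 0 1 \<subseteq> S"
proof -
  have ps: "prob_space M" and sb: "sets M = sets borel"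
    using assms(1) by (auto simp: continuous_prob_measure_def)
  interpret prob_space M by (rule ps)
  have sp: "space M = UNIV" using sets_eq_imp_space_eq[OF sb] by simp
  have meas[measurable]: "A \<in> sets borel \<Longrightarrow> A \<in> sets M" for A using sb by simp
  have Sne: "S \<noteq> {}"
  proof
    assume "S = {}" then show False using assms(2,5) by auto
  qed
  have key: "\<exists>x\<in>S. measure M (halfspace_plus v (inner v x)) = \<alpha>" if v: "v \<noteq> 0" for v
  proof -
    define N where "N = distr M borel (\<lambda>y. y \<bullet> v)"
    have rv: "random_variable borel (\<lambda>y::'a. y \<bullet> v)"
      by (subst measurable_cong_sets[OF sb refl]) simp
    interpret N: real_distribution N unfolding N_def using rv by simp
    have hn: "{y. y \<bullet> v = t} \<in> null_sets M" for t using hyp_null[OF assms(1) v] .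
    have Nle: "cdf N t = measure M {y. y \<bullet> v \<le> t}" for t
      unfolding cdf_def N_def using rv by (subst measure_distr) (auto simp: sp vimage_def)
    have Nat: "measure N {t} = 0" for t
    proof -
      have "measure N {t} = measure M {y. y \<bullet> v = t}"
        unfolding N_def using rv by (subst measure_distr) (auto simp: sp vimage_def)
      thus ?thesis using hn[of t] by (simp add: measure_eq_0_null_sets)
    qed
    have lt: "measure M {y. y \<bullet> v \<le> t} = measure M {y. y \<bullet> v < t}" for t
    proof -
      have "{y. y \<bullet> v \<le> t} = {y. y \<bullet> v < t} \<union> {y. y \<bullet> v = t}" by auto
      moreover have "{y::'a. y \<bullet> v < t} \<in> sets M"
        by (intro meas) (simp add: open_Collect_less continuous_intros)
      ultimately show ?thesis using measure_Un_null_set[OF _ hn[of t]] by simp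
    qed
    have hs: "measure M (halfspace_plus v (inner v x)) = 1 - measure M {y. y \<bullet> v \<le> x \<bullet> v}" for x
    proof -
      have "halfspace_plus v (inner v x) = space M - {y. y \<bullet> v < x \<bullet> v}"
        by (auto simp: halfspace_plus_def sp inner_commute)
      moreover have "{y::'a. y \<bullet> v < x \<bullet> v} \<in> sets M"
        by (intro meas) (simp add: open_Collect_less continuous_intros)
      ultimately show ?thesis using prob_compl[of "{y::'a. y \<bullet> v < x \<bullet> v}"] lt[of "x \<bullet> v"] by simp
    qed
    define h where "h x = cdf N (x \<bullet> v)" for x
    have hc: "continuous_on S h"
    proof -
      have "continuous_on UNIV (cdf N)"
        using N.isCont_cdf Nat by (simp add: continuous_on_eq_continuous_at)
      hence "continuous_on ((\<lambda>x. x \<bullet> v) ` S) (cdf N)" by (rule continuous_on_subset) auto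
      thus ?thesis unfolding h_def
        using continuous_on_compose[of S "\<lambda>x. x \<bullet> v" "cdf N"]
        by (simp add: o_def continuous_intros)
    qed
    have ic: "continuous_on S (\<lambda>x. x \<bullet> v)" by (intro continuous_intros)
    obtain a where a: "a \<in> S" "\<And>y. y \<in> S \<Longrightarrow> a \<bullet> v \<le> y \<bullet> v"
      using continuous_attains_inf[OF assms(3) Sne ic] by blast
    obtain b where b: "b \<in> S" "\<And>y. y \<in> S \<Longrightarrow> y \<bullet> v \<le> b \<bullet> v"
      using continuous_attains_sup[OF assms(3) Sne ic] by blast
    have Sm: "S \<in> sets M" using assms(3) by (intro meas) (simp add: compact_imp_closed)
    have ha: "h a \<le> 1 - \<alpha>"
    proof -
      have "{y. y \<bullet> v < a \<bullet> v} \<subseteq> space M - S" using a(2) by (force simp: sp)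
      hence "measure M {y. y \<bullet> v < a \<bullet> v} \<le> measure M (space M - S)"
        using Sm by (intro finite_measure_mono) auto
      also have "\<dots> = 1 - measure M S" using prob_compl[OF Sm] .
      finally show ?thesis unfolding h_def Nle lt using assms(5) by simp
    qed
    have hb: "h b \<ge> 1 - \<alpha>"
    proof -
      have "S \<subseteq> {y. y \<bullet> v \<le> b \<bullet> v}" using b(2) by auto
      hence "measure M S \<le> measure M {y. y \<bullet> v \<le> b \<bullet> v}"
        by (intro finite_measure_mono) (auto intro!: meas simp: closed_Collect_le continuous_intros)
      thus ?thesis unfolding h_def Nle using assms(5) by simp
    qed
    have "connected (h ` S)" using connected_continuous_image[OF hc assms(4)] .
    hence "1 - \<alpha> \<in> h ` S" using ha hb a(1) b(1) unfolding connected_iff_interval by blast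
    then obtain x where x: "x \<in> S" "h x = 1 - \<alpha>" by (metis imageE)
    have "measure M (halfspace_plus v (inner v x)) = \<alpha>"
      using hs[of x] x(2) unfolding h_def Nle by simp
    thus ?thesis using x(1) by blast
  qed
  define f where "f v = (SOME x. x \<in> S \<and> measure M (halfspace_plus v (inner v x)) = \<alpha>)" for v
  have "f v \<in> S \<and> measure M (halfspace_plus v (inner v (f v))) = \<alpha>" if "v \<in> sphere 0 1" for v
  proof -
    have "v \<noteq> 0" using that by auto
    then have "\<exists>x. x \<in> S \<and> measure M (halfspace_plus v (inner v x)) = \<alpha>" using key by blast
    then show ?thesis unfolding f_def by (rule someI_ex)
  qed
  thus ?thesis by (intro exI[of _ f]) auto
qed

end
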